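(* Let $\alpha,\beta\in[0,\pi)$ and let $\omega\in L^1([0,1],\mathbb{R})$ with $\omega>0$ a.e., satisfying (H1) $\omega$ is monotonic on $[0,1]$ and (H2) $\inf_{x\in[0,1]}\omega(x)>0$. For $q\in L^1([0,1],\mathbb{R})$ consider the eigenvalue problem $$-y''(x)+q(x)y(x)=\lambda\,\omega(x)\,y(x)\ \text{on }[0,1],\qquad y(0)\cos\alpha+y'(0)\sin\alpha=0,\quad y(1)\cos\beta+y'(1)\sin\beta=0,$$ with eigenvalues $\lambda_1(q)<\lambda_2(q)<\cdots$. Then for every $L^1$-norm bounded subset $\Omega\subset L^1([0,1],\mathbb{R})$ there exists $M(\Omega)>0$ such that every normalized eigenfunction $\varphi_n(\cdot;\lambda_n(q))$ associated with $\lambda_n(q)$ satisfies $$|\varphi_n(x;\lambda_n(q))|\le M(\Omega)$$ for all $n\ge 1$, all $q\in\Omega$ and all $x\in[0,1]$.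
   Context: A normalized eigenfunction associated with an eigenvalue $\lambda$ is an eigenfunction $\varphi$ with $\int_0^1\omega(x)|\varphi(x)|^2\,dx=1$. The eigenvalues of the problem are real, simple, and satisfy $\lambda_n(q)\to\infty$. *)

theory Defs
  imports "HOL-Analysis.Analysis"
begin

text \<open>Weak (Caratheodory) solutions of  -y'' + q y = lam w y  on [0,1]:
  y is differentiable on [0,1] with derivative y', and y' is the indefinite
  integral of (q - lam w) y.\<close>

definition SL_eigenpair ::
  "real \<Rightarrow> real \<Rightarrow> (real \<Rightarrow> real) \<Rightarrow> (real \<Rightarrow> real) \<Rightarrow> real \<Rightarrow> (real \<Rightarrow> real) \<Rightarrow> bool" where
  "SL_eigenpair \<alpha> \<beta> w q lam y \<longleftrightarrow>
     (\<exists>y'. (\<forall>x\<in>{0..1}. (y has_real_derivative y' x) (at x within {0..1})) \<and>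
          (\<forall>x\<in>{0..1}. ((\<lambda>t. (q t - lam * w t) * y t) has_integral (y' x - y' 0)) {0..x}) \<and>
          y 0 * cos \<alpha> + y' 0 * sin \<alpha> = 0 \<and>
          y 1 * cos \<beta> + y' 1 * sin \<beta> = 0 \<and>
          (\<exists>x\<in>{0..1}. y x \<noteq> 0))"

definition SL_normalized :: "(real \<Rightarrow> real) \<Rightarrow> (real \<Rightarrow> real) \<Rightarrow> bool" where
  "SL_normalized w y \<longleftrightarrow> integral {0..1} (\<lambda>x. w x * (y x)\<^sup>2) = 1"

end

theory Submission
  imports Defs
begin

lemma cont_mult_ai:
  fixes f g :: "real \<Rightarrow> real"
  assumes "continuous_on {a..b} f" "g absolutely_integrable_on {a..b}"
  shows "(\<lambda>x. f x * g x) absolutely_integrable_on {a..b}"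
proof (rule absolutely_integrable_bounded_measurable_product_real)
  show "f \<in> borel_measurable (lebesgue_on {a..b})"
    by (rule continuous_imp_measurable_on_sets_lebesgue[OF assms(1)]) simp
  show "bounded (f ` {a..b})"
    by (rule compact_imp_bounded[OF compact_continuous_image[OF assms(1) compact_Icc]])
  show "{a..b} \<in> sets lebesgue" by simp
  show "g absolutely_integrable_on {a..b}" by (rule assms(2))
qed

lemma ai_int: fixes f :: "real \<Rightarrow> real"
  shows "f absolutely_integrable_on S \<Longrightarrow> f integrable_on S"
  by (simp add: absolutely_integrable_on_def)

lemma ai_abs_int: fixes f :: "'a::euclidean_space \<Rightarrow> real"
  shows "f absolutely_integrable_on S \<Longrightarrow> (\<lambda>x. \<bar>f x\<bar>) integrable_on S"
  by (simp add: absolutely_integrable_on_def)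

lemma LV:
  fixes \<Phi> H :: "real \<Rightarrow> real"
  assumes ab: "a \<le> b"
    and Hmono: "\<And>s t. a \<le> s \<Longrightarrow> s \<le> t \<Longrightarrow> t \<le> b \<Longrightarrow> H s \<le> H t"
    and loc: "\<And>e. e > 0 \<Longrightarrow> \<exists>d>0. \<forall>s t. a \<le> s \<longrightarrow> s \<le> t \<longrightarrow> t \<le> b \<longrightarrow> t - s < d \<longrightarrow> \<bar>\<Phi> t - \<Phi> s\<bar> \<le> e * (H t - H s)"
  shows "\<Phi> b = \<Phi> a"
proof -
  have key: "\<bar>\<Phi> b - \<Phi> a\<bar> \<le> e * (H b - H a)" if e: "e > 0" for e
  proof -
    obtain d where d: "d > 0" and dd: "\<forall>s t. a \<le> s \<longrightarrow> s \<le> t \<longrightarrow> t \<le> b \<longrightarrow> t - s < d \<longrightarrow> \<bar>\<Phi> t - \<Phi> s\<bar> \<le> e * (H t - H s)"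
      using loc[OF e] by blast
    obtain n :: nat where n: "real n > (b - a) / d"
      using reals_Archimedean2 by blast
    have n0: "n > 0"
    proof (rule ccontr)
      assume "\<not> n > 0"
      then have "n = 0" by simp
      with n have "(b - a) / d < 0" by simp
      with ab d show False by (simp add: divide_less_0_iff)
    qed
    define x where "x k = a + real k * ((b - a) / real n)" for k
    have hpos: "(b - a) / real n \<ge> 0" using ab n0 by simp
    have "b - a < real n * d" using n d by (simp add: pos_divide_less_eq)
    then have step: "(b - a) / real n < d"
      using n0 by (simp add: pos_divide_less_eq mult.commute)
    have xd: "x (Suc k) = x k + (b - a) / real n" for k
      unfolding x_def by (simp add: distrib_right add_divide_distrib)
    have xmono: "x k \<le> x (Suc k)" for k
      using xd hpos by simp
    have xa: "a \<le> x k" for k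
    proof -
      have "0 \<le> real k * ((b - a) / real n)" by (rule mult_nonneg_nonneg) (use hpos in auto)
      then show ?thesis unfolding x_def by linarith
    qed
    have xb: "k \<le> n \<Longrightarrow> x k \<le> b" for k
    proof -
      assume "k \<le> n"
      then have "real k * ((b - a) / real n) \<le> real n * ((b - a) / real n)" using hpos by (intro mult_right_mono) auto
      also have "\<dots> = b - a" using n0 by simp
      finally show ?thesis unfolding x_def by linarith
    qed
    have "k \<le> n \<Longrightarrow> \<bar>\<Phi> (x k) - \<Phi> a\<bar> \<le> e * (H (x k) - H a)" for k
    proof (induction k)
      case 0
      then show ?case by (simp add: x_def)
    next
      case (Suc k)
      have "x (Suc k) - x k = (b - a) / real n" using xd by simp
      then have d1: "x (Suc k) - x k < d" using step by simp
      have "\<bar>\<Phi> (x (Suc k)) - \<Phi> (x k)\<bar> \<le> e * (H (x (Suc k)) - H (x k))"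
        using dd[rule_format, OF xa xmono xb[OF Suc.prems] d1] .
      moreover have "\<bar>\<Phi> (x k) - \<Phi> a\<bar> \<le> e * (H (x k) - H a)" using Suc by simp
      moreover have "e * (H (x (Suc k)) - H a) = e * (H (x (Suc k)) - H (x k)) + e * (H (x k) - H a)"
        by (simp add: algebra_simps)
      moreover have "\<bar>\<Phi> (x (Suc k)) - \<Phi> a\<bar> \<le> \<bar>\<Phi> (x (Suc k)) - \<Phi> (x k)\<bar> + \<bar>\<Phi> (x k) - \<Phi> a\<bar>"
        using abs_triangle_ineq[of "\<Phi> (x (Suc k)) - \<Phi> (x k)" "\<Phi> (x k) - \<Phi> a"] by simp
      ultimately show ?case by linarith
    qed
    from this[of n] have "\<bar>\<Phi> (x n) - \<Phi> a\<bar> \<le> e * (H (x n) - H a)" by simp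
    moreover have "x n = b" using n0 by (simp add: x_def)
    ultimately show ?thesis by simp
  qed
  have "H a \<le> H b" using Hmono ab by simp
  show ?thesis
  proof (rule ccontr)
    assume ne: "\<Phi> b \<noteq> \<Phi> a"
    define D where "D = \<bar>\<Phi> b - \<Phi> a\<bar>"
    have D: "D > 0" using ne by (simp add: D_def)
    have "D \<le> (D / (2 * (H b - H a + 1))) * (H b - H a)"
      using key[of "D / (2 * (H b - H a + 1))"] D \<open>H a \<le> H b\<close> by (simp add: D_def)
    also have "\<dots> < D"
    proof -
      define r where "r = H b - H a"
      have r: "r \<ge> 0" using \<open>H a \<le> H b\<close> by (simp add: r_def)
      have p: "2 * (r + 1) > 0" using r by simp
      have "r < 1 * (2 * (r + 1))" using r by simp
      then have "r / (2 * (r + 1)) < 1" using p by (simp only: divide_less_eq) simp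
      then have "D * (r / (2 * (r + 1))) < D * 1" using D by (intro mult_strict_left_mono) auto
      moreover have "D / (2 * (H b - H a + 1)) * (H b - H a) = D * (r / (2 * (r + 1)))"
        unfolding r_def by simp
      ultimately show ?thesis by simp
    qed
    finally show False by simp
  qed
qed

lemma PR:
  fixes u v g h :: "real \<Rightarrow> real"
  assumes ab: "a \<le> b" and cu: "continuous_on {a..b} u" and cv: "continuous_on {a..b} v"
    and g: "g absolutely_integrable_on {a..b}" and h: "h absolutely_integrable_on {a..b}"
    and du: "\<And>s t. a \<le> s \<Longrightarrow> s \<le> t \<Longrightarrow> t \<le> b \<Longrightarrow> u t - u s = integral {s..t} g"
    and dv: "\<And>s t. a \<le> s \<Longrightarrow> s \<le> t \<Longrightarrow> t \<le> b \<Longrightarrow> v t - v s = integral {s..t} h"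
  shows "((\<lambda>t. v t * g t + u t * h t) has_integral (u b * v b - u a * v a)) {a..b}"
proof -
  let ?F = "\<lambda>t. v t * g t + u t * h t"
  let ?G = "\<lambda>r. \<bar>g r\<bar> + \<bar>h r\<bar>"
  have gv: "(\<lambda>t. v t * g t) integrable_on {a..b}" by (rule ai_int[OF cont_mult_ai[OF cv g]])
  have uh: "(\<lambda>t. u t * h t) integrable_on {a..b}" by (rule ai_int[OF cont_mult_ai[OF cu h]])
  have Fint: "?F integrable_on {a..b}" using integrable_add[OF gv uh] by simp
  have Gint: "?G integrable_on {a..b}" using integrable_add[OF ai_abs_int[OF g] ai_abs_int[OF h]] .
  have gi: "g integrable_on {a..b}" "h integrable_on {a..b}" using g h ai_int by auto
  have sub: "integral {a..t} f - integral {a..s} f = integral {s..t} f"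
    if "f integrable_on {a..b}" "a \<le> s" "s \<le> t" "t \<le> b" for s t and f :: "real \<Rightarrow> real"
  proof -
    have "f integrable_on {a..t}" by (rule integrable_subinterval_real[OF that(1)]) (use that in auto)
    then show ?thesis using Henstock_Kurzweil_Integration.integral_combine[where a=a and c=s and b=t and f=f] that by simp
  qed
  have si: "f integrable_on {s..t}" if "f integrable_on {a..b}" "a \<le> s" "t \<le> b" for s t and f :: "real \<Rightarrow> real"
    by (rule integrable_subinterval_real[OF that(1)]) (use that in auto)
  define \<Phi> where "\<Phi> t = u t * v t - integral {a..t} ?F" for t
  define H where "H t = integral {a..t} ?G" for t
  have Hmono: "H s \<le> H t" if "a \<le> s" "s \<le> t" "t \<le> b" for s t
  proof -
    have "H t - H s = integral {s..t} ?G" unfolding H_def using sub[OF Gint that] .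
    moreover have "integral {s..t} ?G \<ge> 0" by (rule integral_nonneg) (use si[OF Gint that(1) that(3)] in auto)
    ultimately show ?thesis by simp
  qed
  have loc: "\<exists>d>0. \<forall>s t. a \<le> s \<longrightarrow> s \<le> t \<longrightarrow> t \<le> b \<longrightarrow> t - s < d \<longrightarrow> \<bar>\<Phi> t - \<Phi> s\<bar> \<le> e * (H t - H s)"
    if e: "e > 0" for e
  proof -
    have "uniformly_continuous_on {a..b} u" "uniformly_continuous_on {a..b} v"
      using cu cv compact_uniformly_continuous by blast+
    then have "\<exists>d>0. \<forall>x\<in>{a..b}. \<forall>x'\<in>{a..b}. dist x' x < d \<longrightarrow> dist (u x') (u x) < e"
       "\<exists>d>0. \<forall>x\<in>{a..b}. \<forall>x'\<in>{a..b}. dist x' x < d \<longrightarrow> dist (v x') (v x) < e"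
      unfolding uniformly_continuous_on_def using e by simp_all
    then obtain d1 d2 where d1: "d1 > 0" "\<forall>x\<in>{a..b}. \<forall>x'\<in>{a..b}. dist x' x < d1 \<longrightarrow> dist (u x') (u x) < e"
      and d2: "d2 > 0" "\<forall>x\<in>{a..b}. \<forall>x'\<in>{a..b}. dist x' x < d2 \<longrightarrow> dist (v x') (v x) < e"
      by auto
    show ?thesis
    proof (intro exI[of _ "min d1 d2"] conjI allI impI)
      show "min d1 d2 > 0" using d1 d2 by simp
      fix s t assume st: "a \<le> s" "s \<le> t" "t \<le> b" "t - s < min d1 d2"
      define ig where "ig = integral {s..t} g"
      define ih where "ih = integral {s..t} h"
      define igv where "igv = integral {s..t} (\<lambda>r. v r * g r)"
      define iuh where "iuh = integral {s..t} (\<lambda>r. u r * h r)"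
      have A: "((\<lambda>r. v t * g r) has_integral v t * ig) {s..t}"
        unfolding ig_def by (intro has_integral_mult_right integrable_integral si[OF gi(1) st(1) st(3)])
      have B: "((\<lambda>r. v r * g r) has_integral igv) {s..t}"
        unfolding igv_def by (intro integrable_integral si[OF gv st(1) st(3)])
      have C: "((\<lambda>r. u s * h r) has_integral u s * ih) {s..t}"
        unfolding ih_def by (intro has_integral_mult_right integrable_integral si[OF gi(2) st(1) st(3)])
      have D: "((\<lambda>r. u r * h r) has_integral iuh) {s..t}"
        unfolding iuh_def by (intro integrable_integral si[OF uh st(1) st(3)])
      have K: "((\<lambda>r. (v t * g r - v r * g r) + (u s * h r - u r * h r)) has_integral
                 (v t * ig - igv) + (u s * ih - iuh)) {s..t}"
        by (intro has_integral_add has_integral_diff A B C D)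
      have "\<Phi> t - \<Phi> s = u t * v t - u s * v s - integral {s..t} ?F"
        unfolding \<Phi>_def using sub[OF Fint st(1-3)] by simp
      also have "integral {s..t} ?F = igv + iuh"
        unfolding igv_def iuh_def by (intro integral_add si[OF gv st(1) st(3)] si[OF uh st(1) st(3)])
      also have "u t * v t - u s * v s = v t * ig + u s * ih"
        using du[OF st(1-3)] dv[OF st(1-3)] unfolding ig_def ih_def by (simp add: algebra_simps)
      finally have "\<Phi> t - \<Phi> s = (v t * ig - igv) + (u s * ih - iuh)" by simp
      also have "\<dots> = integral {s..t} (\<lambda>r. (v t * g r - v r * g r) + (u s * h r - u r * h r))"
        using K by (simp add: integral_unique)
      finally have eq: "\<Phi> t - \<Phi> s = integral {s..t} (\<lambda>r. (v t * g r - v r * g r) + (u s * h r - u r * h r))" .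
      have "\<bar>integral {s..t} (\<lambda>r. (v t * g r - v r * g r) + (u s * h r - u r * h r))\<bar>
            \<le> integral {s..t} (\<lambda>r. e * ?G r)"
      proof (rule integral_norm_bound_integral[where 'a=real, simplified])
        show "(\<lambda>r. (v t * g r - v r * g r) + (u s * h r - u r * h r)) integrable_on {s..t}"
          using K by blast
        show "(\<lambda>r. e * ?G r) integrable_on {s..t}"
          by (rule integrable_on_mult_right[OF si[OF Gint st(1) st(3)]])
        fix r assume r: "r \<in> {s..t}"
        have "\<bar>v t - v r\<bar> < e" using d2 st r by (auto simp: dist_real_def)
        moreover have "\<bar>u s - u r\<bar> < e" using d1 st r by (auto simp: dist_real_def)
        ultimately have "\<bar>(v t - v r) * g r\<bar> \<le> e * \<bar>g r\<bar>" "\<bar>(u s - u r) * h r\<bar> \<le> e * \<bar>h r\<bar>"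
          by (auto simp: abs_mult intro!: mult_right_mono)
        then show "\<bar>(v t * g r - v r * g r) + (u s * h r - u r * h r)\<bar> \<le> e * ?G r"
          by (simp add: algebra_simps abs_le_iff) linarith?
      qed
      also have "\<dots> = e * (H t - H s)"
        unfolding H_def using sub[OF Gint st(1-3)] si[OF Gint st(1) st(3)] by simp
      finally show "\<bar>\<Phi> t - \<Phi> s\<bar> \<le> e * (H t - H s)" using eq by simp
    qed
  qed
  have "\<Phi> b = \<Phi> a" by (rule LV[OF ab Hmono loc]) auto
  then have "integral {a..b} ?F = u b * v b - u a * v a" by (simp add: \<Phi>_def)
  then show ?thesis using Fint by (metis has_integral_integral)
qed


lemma sub_bound:
  fixes F G :: "real \<Rightarrow> real"
  assumes F: "F integrable_on {a..b}" and G: "G integrable_on {a..b}"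
    and FG: "\<And>x. x \<in> {a..b} \<Longrightarrow> \<bar>F x\<bar> \<le> G x"
    and st: "a \<le> s" "s \<le> t" "t \<le> b"
  shows "\<bar>integral {s..t} F\<bar> \<le> integral {a..b} G"
proof -
  have sub: "{s..t} \<subseteq> {a..b}" using st by auto
  have Fs: "F integrable_on {s..t}" by (rule integrable_subinterval_real[OF F sub])
  have Gs: "G integrable_on {s..t}" by (rule integrable_subinterval_real[OF G sub])
  have "\<bar>integral {s..t} F\<bar> \<le> integral {s..t} G"
    using integral_norm_bound_integral[OF Fs Gs] FG sub by auto
  also have "\<dots> \<le> integral {a..b} G"
  proof (rule integral_subset_le[OF sub Gs G])
    show "\<forall>x\<in>{a..b}. 0 \<le> G x" using FG by (meson abs_ge_zero order_trans)
  qed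
  finally show ?thesis .
qed

lemma smvt2:
  fixes f g :: "real \<Rightarrow> real"
  assumes f: "f integrable_on {a..b}" and ab: "a \<le> b"
    and g: "(\<forall>x y. a \<le> x \<longrightarrow> x \<le> y \<longrightarrow> y \<le> b \<longrightarrow> g x \<le> g y) \<or> (\<forall>x y. a \<le> x \<longrightarrow> x \<le> y \<longrightarrow> y \<le> b \<longrightarrow> g y \<le> g x)"
  obtains c where "c \<in> {a..b}"
    "((\<lambda>x. g x * f x) has_integral (g a * integral {a..c} f + g b * integral {c..b} f)) {a..b}"
proof -
  from g show thesis
  proof
    assume mono: "\<forall>x y. a \<le> x \<longrightarrow> x \<le> y \<longrightarrow> y \<le> b \<longrightarrow> g x \<le> g y"
    obtain c where c: "c \<in> {a..b}"
      "((\<lambda>x. g x * f x) has_integral (g a * integral {a..c} f + g b * integral {c..b} f)) {a..b}"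
      by (rule second_mean_value_theorem_full[OF f ab, of g]) (use mono in auto)
    show thesis by (rule that[OF c(1) c(2)])
  next
    assume mono: "\<forall>x y. a \<le> x \<longrightarrow> x \<le> y \<longrightarrow> y \<le> b \<longrightarrow> g y \<le> g x"
    obtain c where c: "c \<in> {a..b}"
      "((\<lambda>x. (- g x) * f x) has_integral ((- g a) * integral {a..c} f + (- g b) * integral {c..b} f)) {a..b}"
      by (rule second_mean_value_theorem_full[OF f ab, of "\<lambda>x. - g x"]) (use mono in auto)
    from has_integral_neg[OF c(2)]
    have "((\<lambda>x. g x * f x) has_integral (g a * integral {a..c} f + g b * integral {c..b} f)) {a..b}"
      by (simp add: add.commute)
    then show thesis by (rule that[OF c(1)])
  qed
qed

locale sl =
  fixes w q y u :: "real \<Rightarrow> real" and lam m W C0 :: real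
  assumes m: "m > 0" and wb: "\<And>x. x \<in> {0..1} \<Longrightarrow> m \<le> w x \<and> w x \<le> W"
    and wmono: "(\<forall>x z. 0 \<le> x \<longrightarrow> x \<le> z \<longrightarrow> z \<le> 1 \<longrightarrow> w x \<le> w z) \<or> (\<forall>x z. 0 \<le> x \<longrightarrow> x \<le> z \<longrightarrow> z \<le> 1 \<longrightarrow> w z \<le> w x)"
    and wai: "w absolutely_integrable_on {0..1}"
    and qai: "q absolutely_integrable_on {0..1}"
    and qC: "integral {0..1} (\<lambda>x. \<bar>q x\<bar>) \<le> C0"
    and yd: "\<And>x. x \<in> {0..1} \<Longrightarrow> (y has_real_derivative u x) (at x within {0..1})"
    and ui: "\<And>x. x \<in> {0..1} \<Longrightarrow> ((\<lambda>t. (q t - lam * w t) * y t) has_integral (u x - u 0)) {0..x}"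
    and nrm: "integral {0..1} (\<lambda>x. w x * (y x)\<^sup>2) = 1"
begin

definition g where "g t = (q t - lam * w t) * y t"

lemma wpos: "x \<in> {0..1} \<Longrightarrow> w x > 0"
  using wb[of x] m by linarith

lemma yc: "continuous_on {0..1} y"
  by (rule DERIV_continuous_on) (rule yd)

lemma gi: "g integrable_on {0..1}"
  using ui[of 1] unfolding g_def[abs_def] by auto

lemma uint: "x \<in> {0..1} \<Longrightarrow> u x - u 0 = integral {0..x} g"
  using ui[of x] unfolding g_def[abs_def] by (simp add: integral_unique)

lemma uc: "continuous_on {0..1} u"
proof -
  have "continuous_on {0..1} (\<lambda>x. u 0 + integral {0..x} g)"
    by (intro continuous_intros indefinite_integral_continuous_1 gi)
  moreover have "\<And>x. x \<in> {0..1} \<Longrightarrow> u 0 + integral {0..x} g = u x"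
    using uint by (metis add.commute diff_add_cancel)
  ultimately show ?thesis by (rule continuous_on_eq)
qed

lemma qw_ai: "(\<lambda>t. q t - lam * w t) absolutely_integrable_on {0..1}"
proof -
  have "(\<lambda>t. lam * w t) absolutely_integrable_on {0..1}"
    using wai by (rule set_integrable_mult_right)
  then show ?thesis using qai by (intro set_integral_diff(1)) 
qed

lemma gai: "g absolutely_integrable_on {0..1}"
proof -
  have "(\<lambda>t. y t * (q t - lam * w t)) absolutely_integrable_on {0..1}"
    by (rule cont_mult_ai[OF yc qw_ai])
  then show ?thesis unfolding g_def[abs_def] by (simp add: mult.commute)
qed

lemma uai: "u absolutely_integrable_on {0..1}"
  by (rule absolutely_integrable_continuous_real[OF uc])

lemma du: "0 \<le> s \<Longrightarrow> s \<le> t \<Longrightarrow> t \<le> 1 \<Longrightarrow> u t - u s = integral {s..t} g"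
proof -
  assume st: "0 \<le> s" "s \<le> t" "t \<le> 1"
  have "g integrable_on {0..t}" by (rule integrable_subinterval_real[OF gi]) (use st in auto)
  then have "integral {0..s} g + integral {s..t} g = integral {0..t} g"
    using Henstock_Kurzweil_Integration.integral_combine[where a=0 and c=s and b=t and f=g] st by simp
  moreover have "u t - u 0 = integral {0..t} g" "u s - u 0 = integral {0..s} g"
    using uint[of t] uint[of s] st by auto
  ultimately show ?thesis by linarith
qed

lemma dy: "0 \<le> s \<Longrightarrow> s \<le> t \<Longrightarrow> t \<le> 1 \<Longrightarrow> y t - y s = integral {s..t} u"
proof -
  assume st: "0 \<le> s" "s \<le> t" "t \<le> 1"
  have "(u has_integral (y t - y s)) {s..t}"
  proof (rule fundamental_theorem_of_calculus[OF st(2)])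
    fix x assume x: "x \<in> {s..t}"
    have "(y has_real_derivative u x) (at x within {s..t})"
      by (rule has_field_derivative_subset[OF yd]) (use x st in auto)
    then show "(y has_vector_derivative u x) (at x within {s..t})"
      by (simp add: has_real_derivative_iff_has_vector_derivative)
  qed
  then show ?thesis by (simp add: integral_unique)
qed

lemma sub01: "0 \<le> (s::real) \<Longrightarrow> t \<le> 1 \<Longrightarrow> {s..t} \<subseteq> {0..1}" by auto

lemma PR01:
  fixes U V G H :: "real \<Rightarrow> real"
  assumes cu: "continuous_on {0..1} U" and cv: "continuous_on {0..1} V"
    and g: "G absolutely_integrable_on {0..1}" and h: "H absolutely_integrable_on {0..1}"
    and dU: "\<And>s t. 0 \<le> s \<Longrightarrow> s \<le> t \<Longrightarrow> t \<le> 1 \<Longrightarrow> U t - U s = integral {s..t} G"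
    and dV: "\<And>s t. 0 \<le> s \<Longrightarrow> s \<le> t \<Longrightarrow> t \<le> 1 \<Longrightarrow> V t - V s = integral {s..t} H"
    and st: "0 \<le> s" "s \<le> t" "t \<le> 1"
  shows "((\<lambda>r. V r * G r + U r * H r) has_integral (U t * V t - U s * V s)) {s..t}"
proof (rule PR[OF st(2)])
  show "continuous_on {s..t} U" by (rule continuous_on_subset[OF cu sub01[OF st(1,3)]])
  show "continuous_on {s..t} V" by (rule continuous_on_subset[OF cv sub01[OF st(1,3)]])
  show "G absolutely_integrable_on {s..t}" by (rule absolutely_integrable_on_subinterval[OF g sub01[OF st(1,3)]])
  show "H absolutely_integrable_on {s..t}" by (rule absolutely_integrable_on_subinterval[OF h sub01[OF st(1,3)]])
  fix s' t' assume "s \<le> s'" "s' \<le> t'" "t' \<le> t"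
  then show "U t' - U s' = integral {s'..t'} G" "V t' - V s' = integral {s'..t'} H"
    using dU dV st by auto
qed

lemma Puu: "0 \<le> s \<Longrightarrow> s \<le> t \<Longrightarrow> t \<le> 1 \<Longrightarrow>
   ((\<lambda>r. u r * g r + u r * g r) has_integral ((u t)\<^sup>2 - (u s)\<^sup>2)) {s..t}"
  using PR01[OF uc uc gai gai du du, of s t] by (simp add: power2_eq_square)

lemma Pyy: "0 \<le> s \<Longrightarrow> s \<le> t \<Longrightarrow> t \<le> 1 \<Longrightarrow>
   ((\<lambda>r. y r * u r + y r * u r) has_integral ((y t)\<^sup>2 - (y s)\<^sup>2)) {s..t}"
  using PR01[OF yc yc uai uai dy dy, of s t] by (simp add: power2_eq_square)

lemma Pyu: "((\<lambda>r. u r * u r + y r * g r) has_integral (y 1 * u 1 - y 0 * u 0)) {0..1}"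
  using PR01[OF yc uc uai gai dy du, of 0 1] by simp


lemma yc2: "continuous_on {0..1} (\<lambda>x. (y x)\<^sup>2)"
  by (intro continuous_intros yc)

lemma uc2: "continuous_on {0..1} (\<lambda>x. (u x)\<^sup>2)"
  by (intro continuous_intros uc)

lemma wy2_ai: "(\<lambda>x. w x * (y x)\<^sup>2) absolutely_integrable_on {0..1}"
proof -
  have "(\<lambda>x. (y x)\<^sup>2 * w x) absolutely_integrable_on {0..1}" by (rule cont_mult_ai[OF yc2 wai])
  then show ?thesis by (simp add: mult.commute)
qed

lemma qy2_ai: "(\<lambda>x. (y x)\<^sup>2 * q x) absolutely_integrable_on {0..1}"
  by (rule cont_mult_ai[OF yc2 qai])

lemma qabs_int: "(\<lambda>x. \<bar>q x\<bar>) integrable_on {0..1}"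
  by (rule ai_abs_int[OF qai])

lemma qbound:
  fixes F :: "real \<Rightarrow> real"
  assumes st: "0 \<le> s" "s \<le> t" "t \<le> 1" and F: "F integrable_on {s..t}" and Bd: "Bd \<ge> 0"
    and FB: "\<And>r. r \<in> {s..t} \<Longrightarrow> \<bar>F r\<bar> \<le> Bd * \<bar>q r\<bar>"
  shows "\<bar>integral {s..t} F\<bar> \<le> Bd * C0"
proof -
  have sub: "{s..t} \<subseteq> {0..1}" using st by auto
  have qs: "(\<lambda>x. \<bar>q x\<bar>) integrable_on {s..t}" by (rule integrable_subinterval_real[OF qabs_int sub])
  have "\<bar>integral {s..t} F\<bar> \<le> integral {s..t} (\<lambda>r. Bd * \<bar>q r\<bar>)"
    using integral_norm_bound_integral[OF F integrable_on_mult_right[OF qs]] FB by auto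
  also have "\<dots> = Bd * integral {s..t} (\<lambda>r. \<bar>q r\<bar>)"
    by (simp add: integral_mult)
  also have "integral {s..t} (\<lambda>r. \<bar>q r\<bar>) \<le> integral {0..1} (\<lambda>r. \<bar>q r\<bar>)"
    by (rule integral_subset_le[OF sub qs qabs_int]) auto
  then have "Bd * integral {s..t} (\<lambda>r. \<bar>q r\<bar>) \<le> Bd * C0"
    using qC Bd by (meson mult_left_mono order_trans)
  finally show ?thesis .
qed

definition E1 where "E1 x = (u x)\<^sup>2 + lam * (w x * (y x)\<^sup>2)"
definition E2 where "E2 x = (u x)\<^sup>2 * inverse (w x) + lam * (y x)\<^sup>2"

lemma wmono_sub:
  assumes "0 \<le> x" "x \<le> z" "z \<le> 1"
  shows "(\<forall>a b. x \<le> a \<longrightarrow> a \<le> b \<longrightarrow> b \<le> z \<longrightarrow> w a \<le> w b) \<or> (\<forall>a b. x \<le> a \<longrightarrow> a \<le> b \<longrightarrow> b \<le> z \<longrightarrow> w b \<le> w a)"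
  using wmono assms by (meson order_trans)

lemma iwmono_sub:
  assumes "0 \<le> x" "x \<le> z" "z \<le> 1"
  shows "(\<forall>a b. x \<le> a \<longrightarrow> a \<le> b \<longrightarrow> b \<le> z \<longrightarrow> inverse (w a) \<le> inverse (w b)) \<or>
         (\<forall>a b. x \<le> a \<longrightarrow> a \<le> b \<longrightarrow> b \<le> z \<longrightarrow> inverse (w b) \<le> inverse (w a))"
proof -
  have pos: "\<And>a. x \<le> a \<Longrightarrow> a \<le> z \<Longrightarrow> w a > 0" using wpos assms by auto
  from wmono_sub[OF assms] show ?thesis
  proof
    assume h: "\<forall>a b. x \<le> a \<longrightarrow> a \<le> b \<longrightarrow> b \<le> z \<longrightarrow> w a \<le> w b"
    have "\<forall>a b. x \<le> a \<longrightarrow> a \<le> b \<longrightarrow> b \<le> z \<longrightarrow> inverse (w b) \<le> inverse (w a)"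
    proof (intro allI impI)
      fix a b assume "x \<le> a" "a \<le> b" "b \<le> z"
      then show "inverse (w b) \<le> inverse (w a)"
        using h pos[of a] by (intro le_imp_inverse_le) auto
    qed
    then show ?thesis by blast
  next
    assume h: "\<forall>a b. x \<le> a \<longrightarrow> a \<le> b \<longrightarrow> b \<le> z \<longrightarrow> w b \<le> w a"
    have "\<forall>a b. x \<le> a \<longrightarrow> a \<le> b \<longrightarrow> b \<le> z \<longrightarrow> inverse (w a) \<le> inverse (w b)"
    proof (intro allI impI)
      fix a b assume "x \<le> a" "a \<le> b" "b \<le> z"
      then show "inverse (w a) \<le> inverse (w b)"
        using h pos[of b] by (intro le_imp_inverse_le) auto
    qed
    then show ?thesis by blast
  qed
qed

lemma E1_id:
  assumes xz: "0 \<le> x" "x \<le> z" "z \<le> 1"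
  obtains c where "c \<in> {x..z}"
    "E1 z - E1 x = integral {x..z} (\<lambda>r. 2 * (u r * y r) * q r) + lam * (y c)\<^sup>2 * (w z - w x)"
proof -
  let ?f = "\<lambda>r. y r * u r + y r * u r"
  have fint: "?f integrable_on {x..z}" using Pyy[OF xz] by blast
  obtain c where c: "c \<in> {x..z}"
    and hc: "((\<lambda>r. w r * ?f r) has_integral (w x * integral {x..c} ?f + w z * integral {c..z} ?f)) {x..z}"
    by (rule smvt2[OF fint xz(2) wmono_sub[OF xz]])
  have i1: "integral {x..c} ?f = (y c)\<^sup>2 - (y x)\<^sup>2"
  proof -
    have "x \<le> c" "c \<le> 1" using c xz by auto
    from integral_unique[OF Pyy[OF xz(1) this]] show ?thesis .
  qed
  have i2: "integral {c..z} ?f = (y z)\<^sup>2 - (y c)\<^sup>2"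
  proof -
    have "0 \<le> c" "c \<le> z" using c xz by auto
    from integral_unique[OF Pyy[OF this xz(3)]] show ?thesis .
  qed
  have "((\<lambda>r. (u r * g r + u r * g r) + lam * (w r * ?f r)) has_integral
        ((u z)\<^sup>2 - (u x)\<^sup>2) + lam * (w x * ((y c)\<^sup>2 - (y x)\<^sup>2) + w z * ((y z)\<^sup>2 - (y c)\<^sup>2))) {x..z}"
    using has_integral_add[OF Puu[OF xz] has_integral_mult_right[OF hc, of lam]] i1 i2 by simp
  moreover have "(\<lambda>r. (u r * g r + u r * g r) + lam * (w r * ?f r)) = (\<lambda>r. 2 * (u r * y r) * q r)"
    by (rule ext) (simp add: g_def algebra_simps)
  ultimately have "integral {x..z} (\<lambda>r. 2 * (u r * y r) * q r) =
        ((u z)\<^sup>2 - (u x)\<^sup>2) + lam * (w x * ((y c)\<^sup>2 - (y x)\<^sup>2) + w z * ((y z)\<^sup>2 - (y c)\<^sup>2))"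
    by (simp add: integral_unique)
  then have "E1 z - E1 x = integral {x..z} (\<lambda>r. 2 * (u r * y r) * q r) + lam * (y c)\<^sup>2 * (w z - w x)"
    unfolding E1_def by (simp add: algebra_simps)
  then show thesis by (rule that[OF c])
qed

lemma E2_id:
  assumes xz: "0 \<le> x" "x \<le> z" "z \<le> 1"
  obtains c where "c \<in> {x..z}" "(\<lambda>r. 2 * (u r * y r * inverse (w r)) * q r) integrable_on {x..z}"
    "E2 z - E2 x = integral {x..z} (\<lambda>r. 2 * (u r * y r * inverse (w r)) * q r)
        + (u c)\<^sup>2 * (inverse (w z) - inverse (w x))"
proof -
  let ?f = "\<lambda>r. u r * g r + u r * g r"
  have fint: "?f integrable_on {x..z}" using Puu[OF xz] by blast
  obtain c where c: "c \<in> {x..z}"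
    and hc: "((\<lambda>r. inverse (w r) * ?f r) has_integral
        (inverse (w x) * integral {x..c} ?f + inverse (w z) * integral {c..z} ?f)) {x..z}"
    by (rule smvt2[OF fint xz(2) iwmono_sub[OF xz]])
  have i1: "integral {x..c} ?f = (u c)\<^sup>2 - (u x)\<^sup>2"
  proof -
    have "x \<le> c" "c \<le> 1" using c xz by auto
    from integral_unique[OF Puu[OF xz(1) this]] show ?thesis .
  qed
  have i2: "integral {c..z} ?f = (u z)\<^sup>2 - (u c)\<^sup>2"
  proof -
    have "0 \<le> c" "c \<le> z" using c xz by auto
    from integral_unique[OF Puu[OF this xz(3)]] show ?thesis .
  qed
  have h: "((\<lambda>r. inverse (w r) * ?f r + lam * (y r * u r + y r * u r)) has_integral
        (inverse (w x) * ((u c)\<^sup>2 - (u x)\<^sup>2) + inverse (w z) * ((u z)\<^sup>2 - (u c)\<^sup>2)) + lam * ((y z)\<^sup>2 - (y x)\<^sup>2)) {x..z}"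
    using has_integral_add[OF hc has_integral_mult_right[OF Pyy[OF xz], of lam]] i1 i2 by simp
  have eq: "inverse (w r) * ?f r + lam * (y r * u r + y r * u r) = 2 * (u r * y r * inverse (w r)) * q r"
    if r: "r \<in> {x..z}" for r
  proof -
    have "w r \<noteq> 0" using wpos[of r] r xz by auto
    then show ?thesis by (simp add: g_def field_simps)
  qed
  have cong: "((\<lambda>r. inverse (w r) * ?f r + lam * (y r * u r + y r * u r)) has_integral I) {x..z} \<longleftrightarrow>
        ((\<lambda>r. 2 * (u r * y r * inverse (w r)) * q r) has_integral I) {x..z}" for I
    by (rule has_integral_cong) (rule eq)
  have h2: "((\<lambda>r. 2 * (u r * y r * inverse (w r)) * q r) has_integral
        (inverse (w x) * ((u c)\<^sup>2 - (u x)\<^sup>2) + inverse (w z) * ((u z)\<^sup>2 - (u c)\<^sup>2)) + lam * ((y z)\<^sup>2 - (y x)\<^sup>2)) {x..z}"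
    using h cong by blast
  have "E2 z - E2 x = integral {x..z} (\<lambda>r. 2 * (u r * y r * inverse (w r)) * q r)
        + (u c)\<^sup>2 * (inverse (w z) - inverse (w x))"
    using integral_unique[OF h2] unfolding E2_def by (simp add: algebra_simps)
  then show thesis using h2 by (intro that[OF c]) auto
qed


lemma E1_nn: "lam \<ge> 0 \<Longrightarrow> r \<in> {0..1} \<Longrightarrow> E1 r \<ge> 0"
  unfolding E1_def using wpos[of r] by (intro add_nonneg_nonneg mult_nonneg_nonneg) auto

lemma E12: "r \<in> {0..1} \<Longrightarrow> E2 r = E1 r * inverse (w r)"
proof -
  assume r: "r \<in> {0..1}"
  then have "w r \<noteq> 0" using wpos[of r] by auto
  then show ?thesis unfolding E1_def E2_def by (simp add: field_simps)
qed

lemma Wm: "m \<le> W" using wb[of 0] by auto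

lemma P_ai: "(\<lambda>r. 2 * (u r * y r) * q r) absolutely_integrable_on {0..1}"
  by (rule cont_mult_ai[OF _ qai]) (intro continuous_intros uc yc)

lemma CMP:
  assumes lam0: "lam \<ge> 0" and xz: "0 \<le> x" "x \<le> z" "z \<le> 1" and rho0: "\<rho> \<ge> 0"
    and rho: "\<And>r. r \<in> {0..1} \<Longrightarrow> \<bar>2 * (u r * y r)\<bar> \<le> \<rho>"
  shows "E1 x \<le> (W/m) * (E1 z + \<rho> * C0) \<and> E1 z \<le> (W/m) * (E1 x + \<rho> * C0)"
proof -
  let ?P = "\<lambda>r. 2 * (u r * y r) * q r"
  let ?Q = "\<lambda>r. 2 * (u r * y r * inverse (w r)) * q r"
  obtain c1 where c1: "c1 \<in> {x..z}"
    and e1: "E1 z - E1 x = integral {x..z} ?P + lam * (y c1)\<^sup>2 * (w z - w x)"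
    by (rule E1_id[OF xz])
  obtain c2 where c2: "c2 \<in> {x..z}" and Qint: "?Q integrable_on {x..z}"
    and e2: "E2 z - E2 x = integral {x..z} ?Q + (u c2)\<^sup>2 * (inverse (w z) - inverse (w x))"
    by (rule E2_id[OF xz])
  have sub: "{x..z} \<subseteq> {0..1}" using xz by auto
  have Pint: "?P integrable_on {x..z}"
    by (rule integrable_subinterval_real[OF ai_int[OF P_ai] sub])
  have bP: "\<bar>integral {x..z} ?P\<bar> \<le> \<rho> * C0"
  proof (rule qbound[OF xz Pint rho0])
    fix r assume "r \<in> {x..z}"
    then have "r \<in> {0..1}" using sub by auto
    then have "\<bar>2 * (u r * y r)\<bar> * \<bar>q r\<bar> \<le> \<rho> * \<bar>q r\<bar>" using rho by (intro mult_right_mono) auto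
    then show "\<bar>?P r\<bar> \<le> \<rho> * \<bar>q r\<bar>" by (simp add: abs_mult)
  qed
  have bQ: "\<bar>integral {x..z} ?Q\<bar> \<le> (\<rho> * inverse m) * C0"
  proof (rule qbound[OF xz Qint])
    show "\<rho> * inverse m \<ge> 0" using rho0 m by simp
    fix r assume "r \<in> {x..z}"
    then have r: "r \<in> {0..1}" using sub by auto
    have iw: "0 < inverse (w r)" "inverse (w r) \<le> inverse m"
      using wpos[OF r] wb[OF r] m by (auto intro: le_imp_inverse_le)
    have "\<bar>2 * (u r * y r)\<bar> * inverse (w r) \<le> \<rho> * inverse m"
      using rho[OF r] iw rho0 by (intro mult_mono) auto
    then have "\<bar>2 * (u r * y r)\<bar> * inverse (w r) * \<bar>q r\<bar> \<le> \<rho> * inverse m * \<bar>q r\<bar>"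
      by (intro mult_right_mono) auto
    moreover have "\<bar>?Q r\<bar> = \<bar>2 * (u r * y r)\<bar> * inverse (w r) * \<bar>q r\<bar>"
      using iw by (simp add: abs_mult)
    ultimately show "\<bar>?Q r\<bar> \<le> \<rho> * inverse m * \<bar>q r\<bar>" by simp
  qed
  have x01: "x \<in> {0..1}" and z01: "z \<in> {0..1}" using xz by auto
  have K1: "W / m \<ge> 1" using Wm m by simp
  have E1x: "E1 x \<ge> 0" and E1z: "E1 z \<ge> 0" using E1_nn[OF lam0] x01 z01 by auto
  have C0: "C0 \<ge> 0"
  proof -
    have "0 \<le> integral {0..1} (\<lambda>x. \<bar>q x\<bar>)" by (rule integral_nonneg[OF qabs_int]) auto
    then show ?thesis using qC by simp
  qed
  have rC: "\<rho> * C0 \<ge> 0" using rho0 C0 by simp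
  have wx: "m \<le> w x" "w x \<le> W" and wz: "m \<le> w z" "w z \<le> W" using wb x01 z01 by auto
  have E2le: "E2 t \<le> E1 t * inverse m" if t: "t \<in> {0..1}" for t
  proof -
    have "inverse (w t) \<le> inverse m" using wb[OF t] m by (intro le_imp_inverse_le) auto
    then show ?thesis unfolding E12[OF t] using E1_nn[OF lam0 t] by (intro mult_left_mono) auto
  qed
  have E2nn: "E2 t \<ge> 0" if t: "t \<in> {0..1}" for t
    unfolding E12[OF t] using E1_nn[OF lam0 t] wpos[OF t] by simp
  have E1w: "E1 t = w t * E2 t" if t: "t \<in> {0..1}" for t
    unfolding E12[OF t] using wpos[OF t] by (simp add: field_simps)
  have conv: "E1 b \<le> (W/m) * (E1 a + \<rho> * C0)"
    if a: "a \<in> {0..1}" and b: "b \<in> {0..1}" and h: "E2 b \<le> E2 a + (\<rho> * inverse m) * C0" for a b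
  proof -
    have "E1 b = w b * E2 b" by (rule E1w[OF b])
    also have "\<dots> \<le> W * E2 b" using wb[OF b] E2nn[OF b] by (intro mult_right_mono) auto
    also have "\<dots> \<le> W * (E1 a * inverse m + (\<rho> * inverse m) * C0)"
      using h E2le[OF a] Wm m by (intro mult_left_mono) auto
    also have "\<dots> = (W/m) * (E1 a + \<rho> * C0)" using m by (simp add: field_simps)
    finally show ?thesis .
  qed
  have conv1: "E1 a \<le> (W/m) * (E1 b + \<rho> * C0)" if h: "E1 a \<le> E1 b + \<rho> * C0" and b: "b \<in> {0..1}" for a b
  proof -
    have "E1 b + \<rho> * C0 \<ge> 0" using E1_nn[OF lam0 b] rC by simp
    then have "1 * (E1 b + \<rho> * C0) \<le> (W/m) * (E1 b + \<rho> * C0)" using K1 by (intro mult_right_mono) auto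
    then show ?thesis using h by simp
  qed
  from wmono show ?thesis
  proof
    assume mono: "\<forall>x z. 0 \<le> x \<longrightarrow> x \<le> z \<longrightarrow> z \<le> 1 \<longrightarrow> w x \<le> w z"
    then have wxz: "w x \<le> w z" using xz by auto
    have "lam * (y c1)\<^sup>2 * (w z - w x) \<ge> 0" using lam0 wxz by simp
    then have "E1 x \<le> E1 z + \<rho> * C0" using e1 bP by linarith
    moreover have "inverse (w z) \<le> inverse (w x)" using wxz wx m by (intro le_imp_inverse_le) auto
    then have "(u c2)\<^sup>2 * (inverse (w z) - inverse (w x)) \<le> 0"
      by (simp add: mult_nonneg_nonpos)
    then have "E2 z \<le> E2 x + (\<rho> * inverse m) * C0" using e2 bQ by linarith
    ultimately show ?thesis using conv1[OF _ z01] conv[OF x01 z01] by blast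
  next
    assume mono: "\<forall>x z. 0 \<le> x \<longrightarrow> x \<le> z \<longrightarrow> z \<le> 1 \<longrightarrow> w z \<le> w x"
    then have wxz: "w z \<le> w x" using xz by auto
    have "lam * (y c1)\<^sup>2 * (w z - w x) \<le> 0" using lam0 wxz by (simp add: mult_nonneg_nonpos)
    then have "E1 z \<le> E1 x + \<rho> * C0" using e1 bP by linarith
    moreover have "inverse (w x) \<le> inverse (w z)" using wxz wz m by (intro le_imp_inverse_le) auto
    then have "(u c2)\<^sup>2 * (inverse (w z) - inverse (w x)) \<ge> 0" by simp
    then have "E2 x \<le> E2 z + (\<rho> * inverse m) * C0" using e2 bQ by linarith
    ultimately show ?thesis using conv1[OF _ x01] conv[OF z01 x01] by blast
  qed
qed

lemma CMP2:
  assumes lam0: "lam \<ge> 0" and a: "a \<in> {0..1}" and b: "b \<in> {0..1}" and rho0: "\<rho> \<ge> 0"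
    and rho: "\<And>r. r \<in> {0..1} \<Longrightarrow> \<bar>2 * (u r * y r)\<bar> \<le> \<rho>"
  shows "E1 a \<le> (W/m) * (E1 b + \<rho> * C0)"
proof (cases "a \<le> b")
  case True
  then show ?thesis using CMP[OF lam0 _ True _ rho0 rho] a b by auto
next
  case False
  then show ?thesis using CMP[OF lam0 _ _ _ rho0 rho, of b a] a b by auto
qed


lemma amgm:
  fixes a b e :: real
  assumes e: "e > 0"
  shows "\<bar>2 * (a * b)\<bar> \<le> inverse e * a\<^sup>2 + e * b\<^sup>2"
proof -
  have "0 \<le> (\<bar>a\<bar> - e * \<bar>b\<bar>)\<^sup>2" by simp
  then have "2 * e * (\<bar>a\<bar> * \<bar>b\<bar>) \<le> a\<^sup>2 + e\<^sup>2 * b\<^sup>2"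
    by (simp add: power2_eq_square algebra_simps)
  then have "e * \<bar>2 * (a * b)\<bar> \<le> e * (inverse e * a\<^sup>2 + e * b\<^sup>2)"
    using e by (simp add: abs_mult algebra_simps power2_eq_square)
  then show ?thesis using e by simp
qed

lemma final:
  assumes b0: "\<bar>y 0 * u 0\<bar> \<le> ca * (y 0)\<^sup>2" and b1: "\<bar>y 1 * u 1\<bar> \<le> cb * (y 1)\<^sup>2"
    and ca: "ca \<ge> 0" and cb: "cb \<ge> 0" and C0: "C0 \<ge> 0"
    and Ddef: "D = ca + cb + C0 + 1" and Kdef: "K = W / m"
    and Ldef: "\<Lambda> = 16 * K\<^sup>2 * C0\<^sup>2 / m + 8 * K * D / m + 1"
    and x: "x \<in> {0..1}"
  shows "(y x)\<^sup>2 \<le> max (16 * K / m) (2 * (1 + 2 * D) / m + \<Lambda> / D)"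
proof -
  have ne: "{0..1::real} \<noteq> {}" by simp
  obtain x2 where x2: "x2 \<in> {0..1}" and x2m: "\<And>t. t \<in> {0..1} \<Longrightarrow> (y t)\<^sup>2 \<le> (y x2)\<^sup>2"
    using continuous_attains_sup[OF compact_Icc ne yc2] by blast
  obtain x1 where x1: "x1 \<in> {0..1}" and x1m: "\<And>t. t \<in> {0..1} \<Longrightarrow> (u t)\<^sup>2 \<le> (u x1)\<^sup>2"
    using continuous_attains_sup[OF compact_Icc ne uc2] by blast
  obtain s0 where s0: "s0 \<in> {0..1}" and s0m: "\<And>t. t \<in> {0..1} \<Longrightarrow> (y s0)\<^sup>2 \<le> (y t)\<^sup>2"
    using continuous_attains_inf[OF compact_Icc ne yc2] by blast
  define Y where "Y = (y x2)\<^sup>2"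
  define Z where "Z = (u x1)\<^sup>2"
  have Y0: "Y \<ge> 0" and Z0: "Z \<ge> 0" by (auto simp: Y_def Z_def)
  have D1: "D \<ge> 1" using Ddef ca cb C0 by simp
  have K1: "K \<ge> 1" using Kdef Wm m by simp
  define Iu where "Iu = integral {0..1} (\<lambda>r. u r * u r)"
  define Iq where "Iq = integral {0..1} (\<lambda>r. (y r)\<^sup>2 * q r)"
  define B where "B = y 1 * u 1 - y 0 * u 0"
  have uu_int: "((\<lambda>r. u r * u r) has_integral Iu) {0..1}"
    unfolding Iu_def by (intro integrable_integral integrable_continuous_real continuous_intros uc)
  have wy2_hi: "((\<lambda>r. w r * (y r)\<^sup>2) has_integral 1) {0..1}"
    using ai_int[OF wy2_ai] nrm by (metis has_integral_integral)
  have IBP: "Iu = B - Iq + lam"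
  proof -
    have h1: "((\<lambda>r. (y r)\<^sup>2 * q r) has_integral Iq) {0..1}"
      unfolding Iq_def by (intro integrable_integral ai_int[OF qy2_ai])
    have h2: "((\<lambda>r. lam * (w r * (y r)\<^sup>2)) has_integral lam * 1) {0..1}"
      by (rule has_integral_mult_right[OF wy2_hi])
    have "((\<lambda>r. (u r * u r + y r * g r) - ((y r)\<^sup>2 * q r - lam * (w r * (y r)\<^sup>2))) has_integral
          (B - (Iq - lam * 1))) {0..1}"
      unfolding B_def by (rule has_integral_diff[OF Pyu has_integral_diff[OF h1 h2]])
    moreover have "(\<lambda>r. (u r * u r + y r * g r) - ((y r)\<^sup>2 * q r - lam * (w r * (y r)\<^sup>2))) = (\<lambda>r. u r * u r)"
      by (rule ext) (simp add: g_def power2_eq_square algebra_simps)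
    ultimately have "((\<lambda>r. u r * u r) has_integral (B - (Iq - lam * 1))) {0..1}" by simp
    then have "Iu = B - (Iq - lam * 1)" using uu_int has_integral_unique by blast
    then show ?thesis by simp
  qed
  have bB: "\<bar>B\<bar> \<le> (ca + cb) * Y"
  proof -
    have "cb * (y 1)\<^sup>2 \<le> cb * Y" using x2m[of 1] cb by (intro mult_left_mono) (auto simp: Y_def)
    moreover have "ca * (y 0)\<^sup>2 \<le> ca * Y" using x2m[of 0] ca by (intro mult_left_mono) (auto simp: Y_def)
    ultimately show ?thesis using b0 b1 unfolding B_def by (simp add: algebra_simps abs_le_iff) linarith?
  qed
  have bq: "\<bar>Iq\<bar> \<le> Y * C0"
    unfolding Iq_def
  proof (rule qbound[of 0 1])
    show "(\<lambda>r. (y r)\<^sup>2 * q r) integrable_on {0..1}" by (rule ai_int[OF qy2_ai])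
    fix r :: real assume r: "r \<in> {0..1}"
    have "(y r)\<^sup>2 * \<bar>q r\<bar> \<le> Y * \<bar>q r\<bar>" using x2m[OF r] by (intro mult_right_mono) (auto simp: Y_def)
    then show "\<bar>(y r)\<^sup>2 * q r\<bar> \<le> Y * \<bar>q r\<bar>" by (simp add: abs_mult)
  qed (use Y0 in auto)
  have Iu_le: "Iu \<le> lam + D * Y"
  proof -
    have "D * Y = (ca + cb) * Y + Y * C0 + Y" using Ddef by (simp add: algebra_simps)
    then show ?thesis using IBP bB bq Y0 by (simp add: abs_le_iff) linarith?
  qed
  have y2_int: "(\<lambda>r. (y r)\<^sup>2) integrable_on {0..1}"
    by (intro integrable_continuous_real yc2)
  have Iy: "integral {0..1} (\<lambda>r. (y r)\<^sup>2) \<le> inverse m"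
  proof -
    have "integral {0..1} (\<lambda>r. m * (y r)\<^sup>2) \<le> integral {0..1} (\<lambda>r. w r * (y r)\<^sup>2)"
    proof (rule Henstock_Kurzweil_Integration.integral_le)
      show "(\<lambda>r. m * (y r)\<^sup>2) integrable_on {0..1}" by (rule integrable_on_mult_right[OF y2_int])
      show "(\<lambda>r. w r * (y r)\<^sup>2) integrable_on {0..1}" by (rule ai_int[OF wy2_ai])
      fix r :: real assume "r \<in> {0..1}" then show "m * (y r)\<^sup>2 \<le> w r * (y r)\<^sup>2"
        using wb by (intro mult_right_mono) auto
    qed
    then have "m * integral {0..1} (\<lambda>r. (y r)\<^sup>2) \<le> 1" using nrm by (simp add: integral_mult)
    then show ?thesis using m by (simp add: field_simps)
  qed
  have ys0: "(y s0)\<^sup>2 \<le> integral {0..1} (\<lambda>r. (y r)\<^sup>2)"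
  proof -
    have "integral {0..1} (\<lambda>r::real. (y s0)\<^sup>2) \<le> integral {0..1} (\<lambda>r. (y r)\<^sup>2)"
    proof (rule Henstock_Kurzweil_Integration.integral_le)
      show "(\<lambda>r. (y r)\<^sup>2) integrable_on {0..1}" by (rule y2_int)
      show "(\<lambda>r::real. (y s0)\<^sup>2) integrable_on {0..1}" by (intro integrable_continuous_real continuous_intros)
      fix r :: real assume "r \<in> {0..1}" then show "(y s0)\<^sup>2 \<le> (y r)\<^sup>2" by (rule s0m)
    qed
    then show ?thesis by simp
  qed
  have Ybound: "Y \<le> max (16 * K / m) (2 * (1 + 2 * D) / m + \<Lambda> / D)"
  proof (cases "lam < \<Lambda>")
    case True
    define G where "G r = inverse (2 * D) * (u r * u r) + (2 * D) * (y r)\<^sup>2" for r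
    have Gint: "(G has_integral (inverse (2 * D) * Iu + (2 * D) * integral {0..1} (\<lambda>r. (y r)\<^sup>2))) {0..1}"
      unfolding G_def[abs_def]
      by (intro has_integral_add has_integral_mult_right uu_int integrable_integral y2_int)
    have FG: "\<bar>y r * u r + y r * u r\<bar> \<le> G r" for r
    proof -
      have "y r * u r + y r * u r = 2 * (u r * y r)" by simp
      moreover have "\<bar>2 * (u r * y r)\<bar> \<le> inverse (2 * D) * (u r)\<^sup>2 + (2 * D) * (y r)\<^sup>2"
        by (rule amgm) (use D1 in simp)
      ultimately show ?thesis unfolding G_def by (simp add: power2_eq_square)
    qed
    have Fint: "(\<lambda>r. y r * u r + y r * u r) integrable_on {0..1}"
      by (intro integrable_continuous_real continuous_intros yc uc)
    have diffb: "\<bar>(y t)\<^sup>2 - (y s)\<^sup>2\<bar> \<le> integral {0..1} G" if "0 \<le> s" "s \<le> t" "t \<le> 1" for s t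
    proof -
      have "(y t)\<^sup>2 - (y s)\<^sup>2 = integral {s..t} (\<lambda>r. y r * u r + y r * u r)"
        using integral_unique[OF Pyy[OF that]] by simp
      also have "\<bar>\<dots>\<bar> \<le> integral {0..1} G"
        by (rule sub_bound[OF Fint _ _ that]) (use Gint FG in auto)
      finally show ?thesis .
    qed
    have "Y - (y s0)\<^sup>2 \<le> integral {0..1} G"
    proof (cases "s0 \<le> x2")
      case True then show ?thesis using diffb[of s0 x2] s0 x2 unfolding Y_def by auto
    next
      case False then show ?thesis using diffb[of x2 s0] s0 x2 unfolding Y_def by auto
    qed
    also have "integral {0..1} G = inverse (2 * D) * Iu + (2 * D) * integral {0..1} (\<lambda>r. (y r)\<^sup>2)"
      using Gint by (simp add: integral_unique)
    also have "\<dots> \<le> inverse (2 * D) * (lam + D * Y) + (2 * D) * inverse m"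
      using Iu_le Iy D1 by (intro add_mono mult_left_mono) auto
    finally have A0: "Y \<le> (y s0)\<^sup>2 + inverse (2 * D) * (lam + D * Y) + (2 * D) * inverse m" by simp
    define X where "X = inverse (2 * D) * (lam + D * Y)"
    define DM where "DM = D * inverse m"
    define LD where "LD = lam / D"
    define IM where "IM = inverse m"
    define S where "S = (y s0)\<^sup>2"
    have A: "Y \<le> S + X + 2 * DM" using A0 unfolding X_def DM_def S_def by simp
    have B: "X = LD / 2 + Y / 2" unfolding X_def LD_def using D1 by (simp add: field_simps)
    have C: "S \<le> IM" using ys0 Iy unfolding S_def IM_def by simp
    from A B C have "Y \<le> 2 * IM + 4 * DM + LD" by linarith
    then have "Y \<le> 2 * inverse m + 4 * (D * inverse m) + lam / D" unfolding IM_def DM_def LD_def .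
    also have "lam / D \<le> \<Lambda> / D" using True D1 by (intro divide_right_mono) auto
    also have "2 * inverse m + 4 * (D * inverse m) = 2 * (1 + 2 * D) / m" using m by (simp add: field_simps)
    finally show ?thesis by simp
  next
    case False
    then have lL: "\<Lambda> \<le> lam" by simp
    have L1: "16 * K\<^sup>2 * C0\<^sup>2 / m \<le> \<Lambda>" "8 * K * D / m \<le> \<Lambda>" "1 \<le> \<Lambda>"
      using Ldef m K1 D1 C0 by auto
    have lam0: "lam > 0" using lL L1 by simp
    have Lm: "\<Lambda> * m \<le> lam * m" using lL m by (intro mult_right_mono) auto
    have "16 * K\<^sup>2 * C0\<^sup>2 \<le> \<Lambda> * m" using L1(1) m by (simp add: pos_divide_le_eq)
    then have lm1: "16 * K\<^sup>2 * C0\<^sup>2 \<le> lam * m" using Lm by linarith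
    have "8 * K * D \<le> \<Lambda> * m" using L1(2) m by (simp add: pos_divide_le_eq)
    then have lm2: "8 * K * D \<le> lam * m" using Lm by linarith
    define \<mu> where "\<mu> = sqrt (lam * m)"
    have mu0: "\<mu> > 0" using lam0 m by (simp add: \<mu>_def)
    have mu2: "\<mu>\<^sup>2 = lam * m" using lam0 m by (simp add: \<mu>_def)
    have mu4: "4 * K * C0 \<le> \<mu>"
      unfolding \<mu>_def by (rule real_le_rsqrt) (use lm1 in \<open>simp add: power_mult_distrib\<close>)
    define T where "T = Z + lam * m * Y"
    have T0: "T \<ge> 0" using Z0 Y0 lam0 m by (simp add: T_def)
    define \<rho> where "\<rho> = T / \<mu>"
    have rho0: "\<rho> \<ge> 0" using T0 mu0 by (simp add: \<rho>_def)
    have rho: "\<bar>2 * (u r * y r)\<bar> \<le> \<rho>" if r: "r \<in> {0..1}" for r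
    proof -
      have "\<bar>2 * (u r * y r)\<bar> \<le> inverse \<mu> * (u r)\<^sup>2 + \<mu> * (y r)\<^sup>2" by (rule amgm[OF mu0])
      also have "\<dots> \<le> inverse \<mu> * Z + \<mu> * Y"
        using x1m[OF r] x2m[OF r] mu0 unfolding Y_def Z_def by (intro add_mono mult_left_mono) auto
      also have "\<dots> = \<rho>" unfolding \<rho>_def T_def using mu0 mu2[symmetric]
        by (simp add: field_simps power2_eq_square)
      finally show ?thesis .
    qed
    have Tb: "T \<le> 4 * K * E1 b" if b: "b \<in> {0..1}" for b
    proof -
      have c1: "E1 x1 \<le> K * (E1 b + \<rho> * C0)" using CMP2[OF _ x1 b rho0 rho] lam0 Kdef by auto
      have c2: "E1 x2 \<le> K * (E1 b + \<rho> * C0)" using CMP2[OF _ x2 b rho0 rho] lam0 Kdef by auto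
      have "Z \<le> E1 x1" unfolding E1_def Z_def using wpos[OF x1] lam0 by simp
      moreover have "lam * m * Y \<le> E1 x2"
      proof -
        have "lam * (m * Y) \<le> lam * (w x2 * (y x2)\<^sup>2)"
          using wb[OF x2] lam0 Y0 unfolding Y_def by (intro mult_left_mono mult_right_mono) auto
        then show ?thesis unfolding E1_def Y_def using zero_le_power2[of "u x2"]
          by (simp only: mult.assoc)
      qed
      ultimately have "T \<le> 2 * K * E1 b + 2 * K * C0 * \<rho>"
        using c1 c2 unfolding T_def by (simp add: algebra_simps)
      moreover have "2 * K * C0 * \<rho> \<le> T / 2"
      proof -
        have "(2 * K * C0) * T \<le> (\<mu> / 2) * T" using mu4 T0 by (intro mult_right_mono) auto
        then show ?thesis unfolding \<rho>_def using mu0 by (simp add: field_simps)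
      qed
      ultimately show ?thesis by linarith
    qed
    have E1int: "(E1 has_integral (Iu + lam * 1)) {0..1}"
    proof -
      have "((\<lambda>r. u r * u r + lam * (w r * (y r)\<^sup>2)) has_integral (Iu + lam * 1)) {0..1}"
        by (intro has_integral_add uu_int has_integral_mult_right wy2_hi)
      moreover have "(\<lambda>r. u r * u r + lam * (w r * (y r)\<^sup>2)) = E1"
        by (rule ext) (simp add: E1_def power2_eq_square)
      ultimately show ?thesis by simp
    qed
    have "T / (4 * K) \<le> Iu + lam * 1"
    proof -
      have "integral {0..1} (\<lambda>r::real. T / (4 * K)) \<le> integral {0..1} E1"
      proof (rule Henstock_Kurzweil_Integration.integral_le)
        show "E1 integrable_on {0..1}" using E1int by blast
        fix r :: real assume r: "r \<in> {0..1}"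
        show "T / (4 * K) \<le> E1 r" using Tb[OF r] K1 by (simp add: pos_divide_le_eq mult.commute)
      qed (intro integrable_continuous_real continuous_intros)
      then show ?thesis using E1int by (simp add: integral_unique)
    qed
    then have "T \<le> 4 * K * (Iu + lam)" using K1 by (simp add: pos_divide_le_eq mult.commute)
    also have "\<dots> \<le> 4 * K * (2 * lam + D * Y)" using Iu_le K1 by (intro mult_left_mono) auto
    finally have T1: "lam * m * Y \<le> 8 * K * lam + 4 * K * D * Y"
      unfolding T_def using Z0 by (simp add: algebra_simps)
    have "(8 * K * D) * Y \<le> (lam * m) * Y" using lm2 Y0 by (intro mult_right_mono)
    then have "(m * Y) * lam \<le> (16 * K) * lam" using T1 by (simp add: algebra_simps)
    then have "m * Y \<le> 16 * K" using lam0 by simp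
    then have "Y \<le> 16 * K / m" using m by (simp add: field_simps)
    then show ?thesis by simp
  qed
  show ?thesis using x2m[OF x] Ybound unfolding Y_def by linarith
qed

end


lemma bc_lemma:
  fixes y0 u0 a :: real
  assumes h: "y0 * cos a + u0 * sin a = 0"
  shows "\<bar>y0 * u0\<bar> \<le> (if sin a = 0 then 0 else \<bar>cos a / sin a\<bar>) * y0\<^sup>2"
proof (cases "sin a = 0")
  case True
  then have "cos a \<noteq> 0" using sin_cos_squared_add[of a] by auto
  then have "y0 = 0" using h True by simp
  then show ?thesis by simp
next
  case False
  have hs: "u0 * sin a = - (y0 * cos a)" using h by linarith
  then have "u0 = - (y0 * cos a) / sin a" using False by (simp add: field_simps)
  then have "y0 * u0 = - (y0\<^sup>2 * (cos a / sin a))" by (simp add: power2_eq_square)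
  then show ?thesis using False by (simp add: abs_mult mult.commute)
qed

lemma abs_le_sq: "\<bar>t::real\<bar> \<le> 1 + t\<^sup>2"
proof (cases "\<bar>t\<bar> \<le> 1")
  case True
  then show ?thesis using zero_le_power2[of t] by linarith
next
  case False
  then have "\<bar>t\<bar> * 1 \<le> \<bar>t\<bar> * \<bar>t\<bar>" by (intro mult_left_mono) auto
  then show ?thesis by (simp add: power2_eq_square)
qed

theorem proposition3p5:
  fixes \<alpha> \<beta> :: real and w :: "real \<Rightarrow> real" and \<Omega> :: "(real \<Rightarrow> real) set"
  assumes "0 \<le> \<alpha>" "\<alpha> < pi" "0 \<le> \<beta>" "\<beta> < pi"
    and "w absolutely_integrable_on {0..1}"
    and "AE x in lebesgue_on {0..1}. w x > 0"
    and H1: "mono_on {0..1} w \<or> antimono_on {0..1} w"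
    and H2: "(INF x\<in>{0..1}. w x) > 0"
    and "\<forall>q\<in>\<Omega>. q absolutely_integrable_on {0..1}"
    and "\<exists>C. \<forall>q\<in>\<Omega>. integral {0..1} (\<lambda>x. \<bar>q x\<bar>) \<le> C"
  shows "\<exists>M>0. \<forall>q\<in>\<Omega>. \<forall>lam y. SL_eigenpair \<alpha> \<beta> w q lam y \<and> SL_normalized w y \<longrightarrow>
            (\<forall>x\<in>{0..1}. \<bar>y x\<bar> \<le> M)"
proof -
  obtain C where C: "\<forall>q\<in>\<Omega>. integral {0..1} (\<lambda>x. \<bar>q x\<bar>) \<le> C" using assms(10) by blast
  define C0 where "C0 = \<bar>C\<bar>"
  have C0: "C0 \<ge> 0" by (simp add: C0_def)
  have qC: "integral {0..1} (\<lambda>x. \<bar>q x\<bar>) \<le> C0" if "q \<in> \<Omega>" for q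
    using C that unfolding C0_def by (meson abs_ge_self order_trans)
  define m where "m = (INF x\<in>{0..1}. w x)"
  have m: "m > 0" using H2 by (simp add: m_def)
  define W where "W = max (w 0) (w 1)"
  have wmono: "(\<forall>x z. 0 \<le> x \<longrightarrow> x \<le> z \<longrightarrow> z \<le> 1 \<longrightarrow> w x \<le> w z) \<or>
      (\<forall>x z. 0 \<le> x \<longrightarrow> x \<le> z \<longrightarrow> z \<le> 1 \<longrightarrow> w z \<le> w x)"
  proof (rule disjE[OF H1])
    assume h: "mono_on {0..1} w"
    have "\<forall>x z. 0 \<le> x \<longrightarrow> x \<le> z \<longrightarrow> z \<le> 1 \<longrightarrow> w x \<le> w z"
    proof (intro allI impI)
      fix x z :: real assume "0 \<le> x" "x \<le> z" "z \<le> 1"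
      then show "w x \<le> w z" by (intro mono_onD[OF h]) auto
    qed
    then show ?thesis by blast
  next
    assume h: "antimono_on {0..1} w"
    have "\<forall>x z. 0 \<le> x \<longrightarrow> x \<le> z \<longrightarrow> z \<le> 1 \<longrightarrow> w z \<le> w x"
    proof (intro allI impI)
      fix x z :: real assume "0 \<le> x" "x \<le> z" "z \<le> 1"
      then show "w z \<le> w x" using monotone_onD[OF h, of x z] by auto
    qed
    then show ?thesis by blast
  qed
  have wlow: "min (w 0) (w 1) \<le> w x" if x: "x \<in> {0..1}" for x
    using wmono x by auto
  have wup: "w x \<le> W" if x: "x \<in> {0..1}" for x
    using wmono x unfolding W_def by auto
  have bdd: "bdd_below (w ` {0..1})"
    unfolding bdd_below_def using wlow by blast
  have wb: "m \<le> w x \<and> w x \<le> W" if x: "x \<in> {0..1}" for x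
    using cINF_lower[OF bdd x] wup[OF x] unfolding m_def by simp
  define ca where "ca = (if sin \<alpha> = 0 then 0 else \<bar>cos \<alpha> / sin \<alpha>\<bar>)"
  define cb where "cb = (if sin \<beta> = 0 then 0 else \<bar>cos \<beta> / sin \<beta>\<bar>)"
  define D where "D = ca + cb + C0 + 1"
  define K where "K = W / m"
  define \<Lambda> where "\<Lambda> = 16 * K\<^sup>2 * C0\<^sup>2 / m + 8 * K * D / m + 1"
  define M where "M = 1 + max (16 * K / m) (2 * (1 + 2 * D) / m + \<Lambda> / D)"
  have ca: "ca \<ge> 0" and cb: "cb \<ge> 0" by (auto simp: ca_def cb_def)
  have K0: "K \<ge> 0" using wb[of 0] m unfolding K_def by simp
  show ?thesis
  proof (intro exI[of _ M] conjI ballI allI impI)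
    have "16 * K / m \<ge> 0" using K0 m by simp
    then show "M > 0" unfolding M_def by linarith
  next
    fix q :: "real \<Rightarrow> real" and lam :: real and y :: "real \<Rightarrow> real" and x :: real
    assume q: "q \<in> \<Omega>" and H: "SL_eigenpair \<alpha> \<beta> w q lam y \<and> SL_normalized w y" and x: "x \<in> {0..1}"
    from H obtain u where yd: "\<forall>x\<in>{0..1}. (y has_real_derivative u x) (at x within {0..1})"
      and ui: "\<forall>x\<in>{0..1}. ((\<lambda>t. (q t - lam * w t) * y t) has_integral (u x - u 0)) {0..x}"
      and bc0: "y 0 * cos \<alpha> + u 0 * sin \<alpha> = 0"
      and bc1: "y 1 * cos \<beta> + u 1 * sin \<beta> = 0"
      unfolding SL_eigenpair_def by blast
    have nrm: "integral {0..1} (\<lambda>x. w x * (y x)\<^sup>2) = 1" using H unfolding SL_normalized_def by blast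
    have slI: "sl w q y u lam m W C0"
    proof
      show "m > 0" by (rule m)
      show "\<And>x. x \<in> {0..1} \<Longrightarrow> m \<le> w x \<and> w x \<le> W" by (rule wb)
      show "(\<forall>x z. 0 \<le> x \<longrightarrow> x \<le> z \<longrightarrow> z \<le> 1 \<longrightarrow> w x \<le> w z) \<or>
            (\<forall>x z. 0 \<le> x \<longrightarrow> x \<le> z \<longrightarrow> z \<le> 1 \<longrightarrow> w z \<le> w x)" by (rule wmono)
      show "w absolutely_integrable_on {0..1}" by (rule assms(5))
      show "q absolutely_integrable_on {0..1}" using assms(9) q by blast
      show "integral {0..1} (\<lambda>x. \<bar>q x\<bar>) \<le> C0" by (rule qC[OF q])
      show "\<And>x. x \<in> {0..1} \<Longrightarrow> (y has_real_derivative u x) (at x within {0..1})" using yd by blast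
      show "\<And>x. x \<in> {0..1} \<Longrightarrow> ((\<lambda>t. (q t - lam * w t) * y t) has_integral (u x - u 0)) {0..x}"
        using ui by blast
      show "integral {0..1} (\<lambda>x. w x * (y x)\<^sup>2) = 1" by (rule nrm)
    qed
    have b0: "\<bar>y 0 * u 0\<bar> \<le> ca * (y 0)\<^sup>2" unfolding ca_def by (rule bc_lemma[OF bc0])
    have b1: "\<bar>y 1 * u 1\<bar> \<le> cb * (y 1)\<^sup>2" unfolding cb_def by (rule bc_lemma[OF bc1])
    have "(y x)\<^sup>2 \<le> max (16 * K / m) (2 * (1 + 2 * D) / m + \<Lambda> / D)"
      by (rule sl.final[OF slI b0 b1 ca cb C0 D_def K_def \<Lambda>_def x])
    then show "\<bar>y x\<bar> \<le> M" using abs_le_sq[of "y x"] unfolding M_def by linarith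
  qed
qed

end
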